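(* Let $k \geq 1$ be a finite integer. The consensus number of the atomic $k$-sliding read/write register type is less than $k+1$; that is, there is no wait-free algorithm implementing consensus among $k+1$ crash-prone asynchronous processes that communicate through atomic read/write registers and any number of atomic $k$-sliding read/write registers.
   Context: System model: $n$ sequential asynchronous processes $p_1,\dots,p_n$ communicating through shared atomic objects; any number of processes may crash (halt prematurely, never recovering); implementations must be wait-free (every operation invoked by a non-crashed process terminates regardless of the behavior of the others). A consensus object provides a single operation $\mathrm{propose}(v)$, invoked at most once per process and returning a value, satisfying: Validity (a decided value was proposed by some process), Agreement (no two processes decide different values), Termination (every correct process that invokes $\mathrm{propose}()$ decides). The consensus number of an object type $T$ is the largest $n$ such that consensus can be wait-free implemented among $n$ processes using atomic read/write registers and objects of type $T$ ($+\infty$ if no such finite $n$ exists). An atomic $k$-sliding read/write register is a shared object whose state is a sequence of values (initially empty), with two atomic (linearizable) operations: $\mathrm{write}(v)$ appends $v$ to the end of the sequence, and $\mathrm{read}()$ returns the ordered sequence of the last $k$ values written before it in the linearization order, where if only $x<k$ values have been written the $k-x$ missing values are replaced by a default value $\bot$. *)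

theory Defs
  imports Main
begin

text \<open>
  Shared objects (indexed by an arbitrary type 'o, so any
  number of them) are either atomic read/write registers (with an initial value) or
  atomic k-sliding read/write registers.  Since objects are atomic, an execution is a
  sequence of atomic steps, determined by the inputs and a schedule (an infinite sequence
  of process identifiers).  A crashed process is one that is scheduled only finitely often.
\<close>

datatype objkind = RWReg | SlidingReg

datatype 'r oper = Read | Write 'r

datatype 'r resp = RegVal 'r | Window "'r option list" | Ack

datatype ('v, 'o, 'r) action = Decide 'v | Invoke 'o "'r oper"

record ('s, 'v, 'o, 'r) algorithm =
  init :: "nat \<Rightarrow> 'v \<Rightarrow> 's"
  act  :: "nat \<Rightarrow> 's \<Rightarrow> ('v, 'o, 'r) action"
  upd  :: "nat \<Rightarrow> 's \<Rightarrow> 'r resp \<Rightarrow> 's"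

text \<open>Value returned by a read of a k-sliding register whose write history (oldest first)
  is h: the last k written values, oldest first, missing values replaced by bottom (None).\<close>
definition window :: "nat \<Rightarrow> 'r list \<Rightarrow> 'r option list" where
  "window k h = replicate (k - length h) None @ map Some (drop (length h - k) h)"

record ('s, 'v, 'o, 'r) config =
  loc :: "nat \<Rightarrow> 's"
  mem :: "'o \<Rightarrow> 'r list"
  dec :: "nat \<Rightarrow> 'v option"

definition read_resp :: "nat \<Rightarrow> ('o \<Rightarrow> objkind) \<Rightarrow> ('o \<Rightarrow> 'r) \<Rightarrow> 'o \<Rightarrow> 'r list \<Rightarrow> 'r resp" where
  "read_resp k kind rinit ob h =
     (case kind ob of
        RWReg \<Rightarrow> RegVal (if h = [] then rinit ob else last h)
      | SlidingReg \<Rightarrow> Window (window k h))"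

text \<open>One atomic step of process p (a decided process has returned from propose and
  takes no further steps).\<close>
definition step :: "nat \<Rightarrow> ('o \<Rightarrow> objkind) \<Rightarrow> ('o \<Rightarrow> 'r) \<Rightarrow> ('s, 'v, 'o, 'r) algorithm
                     \<Rightarrow> nat \<Rightarrow> ('s, 'v, 'o, 'r) config \<Rightarrow> ('s, 'v, 'o, 'r) config" where
  "step k kind rinit A p c =
     (if dec c p \<noteq> None then c else
      (case act A p (loc c p) of
         Decide v \<Rightarrow> c\<lparr>dec := (dec c)(p := Some v)\<rparr>
       | Invoke ob Read \<Rightarrow>
           c\<lparr>loc := (loc c)(p := upd A p (loc c p) (read_resp k kind rinit ob (mem c ob)))\<rparr>
       | Invoke ob (Write r) \<Rightarrow>
           c\<lparr>loc := (loc c)(p := upd A p (loc c p) Ack),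
             mem := (mem c)(ob := mem c ob @ [r])\<rparr>))"

definition initial :: "('s, 'v, 'o, 'r) algorithm \<Rightarrow> (nat \<Rightarrow> 'v) \<Rightarrow> ('s, 'v, 'o, 'r) config" where
  "initial A x = \<lparr>loc = (\<lambda>p. init A p (x p)), mem = (\<lambda>_. []), dec = (\<lambda>_. None)\<rparr>"

primrec exec :: "nat \<Rightarrow> ('o \<Rightarrow> objkind) \<Rightarrow> ('o \<Rightarrow> 'r) \<Rightarrow> ('s, 'v, 'o, 'r) algorithm
                  \<Rightarrow> (nat \<Rightarrow> 'v) \<Rightarrow> (nat \<Rightarrow> nat) \<Rightarrow> nat \<Rightarrow> ('s, 'v, 'o, 'r) config" where
  "exec k kind rinit A x \<sigma> 0 = initial A x"
| "exec k kind rinit A x \<sigma> (Suc t) = step k kind rinit A (\<sigma> t) (exec k kind rinit A x \<sigma> t)"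

definition solves_consensus ::
  "nat \<Rightarrow> nat \<Rightarrow> ('o \<Rightarrow> objkind) \<Rightarrow> ('o \<Rightarrow> 'r) \<Rightarrow> ('s, 'v, 'o, 'r) algorithm \<Rightarrow> bool" where
  "solves_consensus k n kind rinit A \<longleftrightarrow>
     (\<forall>x \<sigma>. (\<forall>t. \<sigma> t < n) \<longrightarrow>
        (\<forall>t p v. p < n \<longrightarrow> dec (exec k kind rinit A x \<sigma> t) p = Some v \<longrightarrow> (\<exists>q<n. v = x q))
      \<and> (\<forall>t p q v w. p < n \<longrightarrow> q < n \<longrightarrow> dec (exec k kind rinit A x \<sigma> t) p = Some v
             \<longrightarrow> dec (exec k kind rinit A x \<sigma> t) q = Some w \<longrightarrow> v = w)
      \<and> (\<forall>p<n. (\<forall>T. \<exists>t\<ge>T. \<sigma> t = p) \<longrightarrow> (\<exists>t. dec (exec k kind rinit A x \<sigma> t) p \<noteq> None)))"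

end

theory Submission
  imports Defs
begin


lemma window_snoc:
  assumes "k \<ge> 1" shows "window k (h @ [v]) = tl (window k h) @ [Some v]"
proof (cases "length h < k")
  case True
  then obtain d where d: "k - length h = Suc d" by (metis Suc_diff_Suc)
  then have "k - Suc (length h) = d" by simp
  then show ?thesis using True d by (simp add: window_def)
next
  case False
  then have "Suc (length h) - k = Suc (length h - k)" using assms by simp
  then show ?thesis using False
    using assms by (simp add: window_def drop_Suc tl_drop[symmetric] map_tl)
qed

lemma window_long: "length ws = k \<Longrightarrow> window k (h @ ws) = map Some ws"
  by (simp add: window_def)

primrec iter_path :: "('a list \<Rightarrow> 'a) \<Rightarrow> nat \<Rightarrow> 'a list" where
  "iter_path g 0 = []"
| "iter_path g (Suc i) = iter_path g i @ [g (iter_path g i)]"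

lemma iter_path_map: "iter_path g t = map (\<lambda>i. g (iter_path g i)) [0..<t]"
  by (induction t) auto

lemma pigeon:
  fixes \<sigma> :: "nat \<Rightarrow> nat" assumes "\<forall>t. \<sigma> t < (n::nat)" shows "\<exists>p<n. \<forall>T. \<exists>t\<ge>T. \<sigma> t = p"
proof (rule ccontr)
  assume "\<not> ?thesis"
  then have "\<forall>p<n. \<exists>T. \<forall>t\<ge>T. \<sigma> t \<noteq> p" by auto
  then obtain f :: "nat \<Rightarrow> nat" where f: "\<forall>p<n. \<forall>t\<ge>f p. \<sigma> t \<noteq> p" by metis
  define t where "t = (\<Sum>p<n. f p)"
  have "\<sigma> t < n" using assms by auto
  then have "f (\<sigma> t) \<le> t" unfolding t_def by (intro member_le_sum) auto
  then show False using f \<open>\<sigma> t < n\<close> by auto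
qed



locale cons =
  fixes k :: nat and n :: nat and kind :: "'o \<Rightarrow> objkind" and rinit :: "'o \<Rightarrow> 'r"
    and A :: "('s, 'v, 'o, 'r) algorithm"
  assumes k1: "k \<ge> 1" and nk: "n = Suc k" and sc: "solves_consensus k n kind rinit A"
begin

definition stp :: "nat \<Rightarrow> ('s, 'v, 'o, 'r) config \<Rightarrow> ('s, 'v, 'o, 'r) config" where
  "stp p c = step k kind rinit A p c"

definition run :: "('s, 'v, 'o, 'r) config \<Rightarrow> nat list \<Rightarrow> ('s, 'v, 'o, 'r) config" where
  "run c ps = fold stp ps c"

lemma run_Nil[simp]: "run c [] = c" by (simp add: run_def)
lemma run_Cons[simp]: "run c (p # ps) = run (stp p c) ps" by (simp add: run_def)
lemma run_append[simp]: "run c (xs @ ys) = run (run c xs) ys" by (simp add: run_def)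

lemma exec_run: "exec k kind rinit A x \<sigma> t = run (initial A x) (map \<sigma> [0..<t])"
  by (induction t) (auto simp: stp_def)

lemma stp_decided: "dec c p \<noteq> None \<Longrightarrow> stp p c = c"
  by (simp add: stp_def step_def)
lemma stp_decide: "dec c p = None \<Longrightarrow> act A p (loc c p) = Decide v \<Longrightarrow>
   stp p c = c\<lparr>dec := (dec c)(p := Some v)\<rparr>"
  by (simp add: stp_def step_def)
lemma stp_read: "dec c p = None \<Longrightarrow> act A p (loc c p) = Invoke ob Read \<Longrightarrow>
   stp p c = c\<lparr>loc := (loc c)(p := upd A p (loc c p) (read_resp k kind rinit ob (mem c ob)))\<rparr>"
  by (simp add: stp_def step_def)
lemma stp_write: "dec c p = None \<Longrightarrow> act A p (loc c p) = Invoke ob (Write v) \<Longrightarrow>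
   stp p c = c\<lparr>loc := (loc c)(p := upd A p (loc c p) Ack), mem := (mem c)(ob := mem c ob @ [v])\<rparr>"
  by (simp add: stp_def step_def)

lemma stp_persist: "dec c p = Some v \<Longrightarrow> dec (stp r c) p = Some v"
  by (auto simp: stp_def step_def split: action.split oper.split)

lemma run_persist: "dec c p = Some v \<Longrightarrow> dec (run c ps) p = Some v"
  by (induction ps arbitrary: c) (auto simp: stp_persist)

lemma exec_persist: "dec (exec k kind rinit A x \<sigma> t) p \<noteq> None \<Longrightarrow>
   dec (exec k kind rinit A x \<sigma> (t + d)) p \<noteq> None"
  by (induction d) (auto simp: stp_persist[unfolded stp_def])

definition sched :: "nat list \<Rightarrow> nat \<Rightarrow> nat \<Rightarrow> nat" where
  "sched ps d t = (if t < length ps then ps ! t else d)"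

lemma map_sched: "map (sched ps d) [0..<length ps + m] = ps @ replicate m d"
  by (rule nth_equalityI) (auto simp: sched_def nth_append)

lemma sched_lt: "set ps \<subseteq> {..<n} \<Longrightarrow> d < n \<Longrightarrow> sched ps d t < n"
  by (auto simp: sched_def dest!: nth_mem)

definition reach :: "('s, 'v, 'o, 'r) config \<Rightarrow> bool" where
  "reach c \<longleftrightarrow> (\<exists>y ps. set ps \<subseteq> {..<n} \<and> c = run (initial A y) ps)"

lemma n_pos: "0 < n" using nk by simp

lemma validity:
  assumes "set ps \<subseteq> {..<n}" "p < n" "dec (run (initial A y) ps) p = Some v"
  shows "\<exists>q<n. v = y q"
proof -
  let ?\<sigma> = "sched ps 0"
  have "\<forall>t. ?\<sigma> t < n" using sched_lt[OF assms(1) n_pos] by auto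
  then have "dec (exec k kind rinit A y ?\<sigma> (length ps + 0)) p = Some v \<longrightarrow> (\<exists>q<n. v = y q)"
    using sc assms(2) unfolding solves_consensus_def by blast
  then show ?thesis using assms(3) map_sched[of ps 0 0] by (simp add: exec_run)
qed

lemma agreement:
  assumes "reach c" "p < n" "q < n" "dec c p = Some v" "dec c q = Some w"
  shows "v = w"
proof -
  obtain y ps where ps: "set ps \<subseteq> {..<n}" "c = run (initial A y) ps" using assms(1) reach_def by auto
  let ?\<sigma> = "sched ps 0"
  have "\<forall>t. ?\<sigma> t < n" using sched_lt[OF ps(1) n_pos] by auto
  then have "dec (exec k kind rinit A y ?\<sigma> (length ps + 0)) p = Some v \<longrightarrow>
     dec (exec k kind rinit A y ?\<sigma> (length ps + 0)) q = Some w \<longrightarrow> v = w"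
    using sc assms(2,3) unfolding solves_consensus_def by blast
  then show ?thesis using assms(4,5) ps map_sched[of ps 0 0] by (simp add: exec_run)
qed

lemma termin:
  assumes "reach c" "p < n"
  shows "\<exists>m d. dec (run c (replicate m p)) p = Some d"
proof -
  obtain y ps where ps: "set ps \<subseteq> {..<n}" "c = run (initial A y) ps" using assms(1) reach_def by auto
  let ?\<sigma> = "sched ps p"
  have "\<forall>t. ?\<sigma> t < n" using sched_lt[OF ps(1) assms(2)] by auto
  moreover have "\<forall>T. \<exists>t\<ge>T. ?\<sigma> t = p"
  proof
    fix T show "\<exists>t\<ge>T. ?\<sigma> t = p" by (rule exI[of _ "max T (length ps)"]) (auto simp: sched_def)
  qed
  ultimately obtain t where "dec (exec k kind rinit A y ?\<sigma> t) p \<noteq> None"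
    using sc assms(2) unfolding solves_consensus_def by blast
  then have "dec (exec k kind rinit A y ?\<sigma> (t + length ps)) p \<noteq> None" by (rule exec_persist)
  then have "dec (run c (replicate t p)) p \<noteq> None"
    using ps map_sched[of ps p t] by (simp add: exec_run add.commute)
  then show ?thesis by blast
qed

lemma reach_run: "reach c \<Longrightarrow> set qs \<subseteq> {..<n} \<Longrightarrow> reach (run c qs)"
  unfolding reach_def by (metis le_sup_iff run_append set_append)

lemma reach_stp: "reach c \<Longrightarrow> p < n \<Longrightarrow> reach (stp p c)"
  using reach_run[of c "[p]"] by simp

definition dv :: "('s, 'v, 'o, 'r) config \<Rightarrow> 'v \<Rightarrow> bool" where
  "dv c v \<longleftrightarrow> (\<exists>qs p. set qs \<subseteq> {..<n} \<and> p < n \<and> dec (run c qs) p = Some v)"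

definition biv :: "('s, 'v, 'o, 'r) config \<Rightarrow> bool" where
  "biv c \<longleftrightarrow> (\<exists>v w. v \<noteq> w \<and> dv c v \<and> dv c w)"

lemma univ: "\<not> biv c \<Longrightarrow> dv c a \<Longrightarrow> dv c d \<Longrightarrow> d = a"
  unfolding biv_def by blast

lemma biv_undec:
  assumes "reach c" "biv c" "p < n" shows "dec c p = None"
proof (rule ccontr)
  assume "dec c p \<noteq> None"
  then obtain v where v: "dec c p = Some v" by auto
  have "w = v" if dw: "dv c w" for w
  proof -
    obtain qs q where "set qs \<subseteq> {..<n}" "q < n" "dec (run c qs) q = Some w" using dw unfolding dv_def by auto
    then show ?thesis using agreement[OF reach_run[OF assms(1)] _ assms(3)] run_persist[OF v] by metis
  qed
  then show False using assms(2) biv_def by metis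
qed

lemma dv_stp: "dv (stp p c) v \<Longrightarrow> p < n \<Longrightarrow> dv c v"
  unfolding dv_def by (metis insert_subset lessThan_iff list.simps(15) run_Cons)

end


context cons begin

definition sim :: "nat set \<Rightarrow> ('s, 'v, 'o, 'r) config \<Rightarrow> ('s, 'v, 'o, 'r) config \<Rightarrow> bool" where
  "sim P c1 c2 \<longleftrightarrow> (\<forall>r. r \<notin> P \<longrightarrow> loc c1 r = loc c2 r) \<and> dec c1 = dec c2 \<and>
     (\<forall>ob. read_resp k kind rinit ob (mem c1 ob) = read_resp k kind rinit ob (mem c2 ob))"

lemma sim_refl: "sim P c c" by (simp add: sim_def)
lemma sim_sym: "sim P c1 c2 \<Longrightarrow> sim P c2 c1" by (simp add: sim_def)

lemma rr_snoc: "read_resp k kind rinit ob h1 = read_resp k kind rinit ob h2 \<Longrightarrow>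
  read_resp k kind rinit ob (h1 @ [v]) = read_resp k kind rinit ob (h2 @ [v])"
  using k1 by (auto simp: read_resp_def window_snoc split: objkind.splits)

lemma sim_stp:
  assumes "sim P c1 c2" "r \<notin> P" shows "sim P (stp r c1) (stp r c2)"
proof -
  have d: "dec c1 = dec c2" and l: "loc c1 r = loc c2 r"
    and m: "\<And>ob. read_resp k kind rinit ob (mem c1 ob) = read_resp k kind rinit ob (mem c2 ob)"
    using assms unfolding sim_def by auto
  show ?thesis
  proof (cases "dec c1 r")
    case (Some x)
    then show ?thesis using assms d by (simp add: stp_decided)
  next
    case None
    then have None2: "dec c2 r = None" using d by simp
    show ?thesis
    proof (cases "act A r (loc c1 r)")
      case (Decide v)
      then show ?thesis using None None2 l assms by (simp add: stp_decide sim_def)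
    next
      case (Invoke ob op)
      then show ?thesis
      proof (cases op)
        case Read
        then show ?thesis using None None2 l m Invoke assms by (simp add: stp_read sim_def)
      next
        case (Write v)
        then show ?thesis using None None2 l m Invoke assms rr_snoc[OF m]
          by (simp add: stp_write sim_def)
      qed
    qed
  qed
qed

lemma sim_run: "sim P c1 c2 \<Longrightarrow> set rs \<inter> P = {} \<Longrightarrow> sim P (run c1 rs) (run c2 rs)"
  by (induction rs arbitrary: c1 c2) (auto intro: sim_stp)

lemma contra:
  assumes "reach c" "p<n" "q<n" "\<not> biv (stp p c)" "\<not> biv (stp q c)"
    "dv (stp p c) a" "dv (stp q c) b" "a \<noteq> b"
    "set qs1 \<subseteq> {..<n}" "set qs2 \<subseteq> {..<n}" "r' < n" "r' \<notin> P"
    "sim P (run (stp p c) qs1) (run (stp q c) qs2)"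
  shows False
proof -
  have "reach (run (stp q c) qs2)" using assms by (intro reach_run reach_stp) auto
  then obtain m d where md: "dec (run (run (stp q c) qs2) (replicate m r')) r' = Some d"
    using termin assms(11) by blast
  have "sim P (run (run (stp p c) qs1) (replicate m r')) (run (run (stp q c) qs2) (replicate m r'))"
    using assms(12,13) by (intro sim_run) auto
  then have md1: "dec (run (run (stp p c) qs1) (replicate m r')) r' = Some d"
    using md by (simp add: sim_def)
  have "dv (stp q c) d" unfolding dv_def using md assms(10,11)
    by (intro exI[of _ "qs2 @ replicate m r'"] exI[of _ r']) auto
  moreover have "dv (stp p c) d" unfolding dv_def using md1 assms(9,11)
    by (intro exI[of _ "qs1 @ replicate m r'"] exI[of _ r']) auto
  ultimately show False using univ assms by metis
qed

lemma pwrite: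
  assumes "reach c" "biv c" "p<n" "q<n" "\<not> biv (stp p c)" "\<not> biv (stp q c)"
    "dv (stp p c) a" "dv (stp q c) b" "a \<noteq> b"
  shows "\<exists>ob v. act A p (loc c p) = Invoke ob (Write v)"
proof -
  have pq: "p \<noteq> q" using assms(5-9) biv_def by blast
  have dp: "dec c p = None" and dq: "dec c q = None" using biv_undec assms by auto
  show ?thesis
  proof (cases "act A p (loc c p)")
    case (Decide v)
    have s1: "stp p c = c\<lparr>dec := (dec c)(p := Some v)\<rparr>" using stp_decide[OF dp Decide] .
    have "dv (stp p c) v" unfolding dv_def using assms(3) s1
      by (intro exI[of _ "[]"] exI[of _ p]) auto
    then have va: "v = a" using univ assms by metis
    have "dec (stp q c) p = None" "loc (stp q c) p = loc c p"
      using dp pq by (auto simp: stp_def step_def split: action.split oper.split)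
    then have "dec (stp p (stp q c)) p = Some v" using Decide stp_decide by simp
    then have "dv (stp q c) v" unfolding dv_def using assms(3)
      by (intro exI[of _ "[p]"] exI[of _ p]) auto
    then have "v = b" using univ assms by metis
    then show ?thesis using va assms by simp
  next
    case (Invoke ob op)
    show ?thesis
    proof (cases op)
      case Read
      have "sim {p} (stp p c) c" using stp_read[OF dp] Invoke Read by (simp add: sim_def)
      then have "sim {p} (stp q (stp p c)) (stp q c)" using pq by (intro sim_stp) auto
      then have "sim {p} (run (stp p c) [q]) (run (stp q c) [])" by simp
      then show ?thesis using contra[OF assms(1,3,4,5,6,7,8,9), of "[q]" "[]" q "{p}"] assms pq
        by auto
    next
      case (Write v)
      then show ?thesis using Invoke by auto
    qed
  qed
qed

end


context cons begin

lemma pair: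
  assumes "reach c" "biv c" "p<n" "q<n" "\<not> biv (stp p c)" "\<not> biv (stp q c)"
    "dv (stp p c) a" "dv (stp q c) b" "a \<noteq> b"
  shows "\<exists>ob vp vq. kind ob = SlidingReg \<and> act A p (loc c p) = Invoke ob (Write vp)
           \<and> act A q (loc c q) = Invoke ob (Write vq)"
proof -
  have pq: "p \<noteq> q" using assms(5-9) biv_def by blast
  have dp: "dec c p = None" and dq: "dec c q = None" using biv_undec assms by auto
  obtain ob vp where P: "act A p (loc c p) = Invoke ob (Write vp)" using pwrite[OF assms] by blast
  obtain ob' vq where Q: "act A q (loc c q) = Invoke ob' (Write vq)"
    using pwrite[OF assms(1,2,4,3,6,5,8,7)] assms(9) by metis
  have sp: "stp p c = c\<lparr>loc := (loc c)(p := upd A p (loc c p) Ack), mem := (mem c)(ob := mem c ob @ [vp])\<rparr>"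
    using stp_write[OF dp P] .
  have sq: "stp q c = c\<lparr>loc := (loc c)(q := upd A q (loc c q) Ack), mem := (mem c)(ob' := mem c ob' @ [vq])\<rparr>"
    using stp_write[OF dq Q] .
  have sqp: "stp q (stp p c) = (stp p c)\<lparr>loc := (loc (stp p c))(q := upd A q (loc c q) Ack),
       mem := (mem (stp p c))(ob' := mem (stp p c) ob' @ [vq])\<rparr>"
    using stp_write[of "stp p c" q ob' vq] sp dq Q pq by simp
  have spq: "stp p (stp q c) = (stp q c)\<lparr>loc := (loc (stp q c))(p := upd A p (loc c p) Ack),
       mem := (mem (stp q c))(ob := mem (stp q c) ob @ [vp])\<rparr>"
    using stp_write[of "stp q c" p ob vp] sq dp P pq by simp
  show ?thesis
  proof (cases "ob = ob'")
    case False
    have "stp q (stp p c) = stp p (stp q c)" using sqp spq sp sq False pq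
      by (auto simp: fun_upd_twist)
    then have "sim {p} (run (stp p c) [q]) (run (stp q c) [p])" by (simp add: sim_refl)
    then show ?thesis using contra[OF assms(1,3,4,5,6,7,8,9), of "[q]" "[p]" q "{p}"] assms pq
      by auto
  next
    case True
    show ?thesis
    proof (cases "kind ob")
      case RWReg
      have "sim {p} (stp q (stp p c)) (stp q c)" using sqp sq sp True RWReg
        by (auto simp: sim_def read_resp_def)
      then have "sim {p} (run (stp p c) [q]) (run (stp q c) [])" by simp
      then show ?thesis using contra[OF assms(1,3,4,5,6,7,8,9), of "[q]" "[]" q "{p}"] assms pq
        by auto
    next
      case SlidingReg
      then show ?thesis using P Q True by auto
    qed
  qed
qed

lemma run_writes:
  "distinct rs \<Longrightarrow> (\<forall>r\<in>set rs. dec c r = None \<and> act A r (loc c r) = Invoke ob (Write (wv r))) \<Longrightarrow>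
   run c rs = c\<lparr>loc := (\<lambda>r. if r \<in> set rs then upd A r (loc c r) Ack else loc c r),
                 mem := (mem c)(ob := mem c ob @ map wv rs)\<rparr>"
proof (induction rs arbitrary: c)
  case Nil
  then show ?case by simp
next
  case (Cons r rs)
  have s: "stp r c = c\<lparr>loc := (loc c)(r := upd A r (loc c r) Ack), mem := (mem c)(ob := mem c ob @ [wv r])\<rparr>"
    using Cons.prems by (intro stp_write) auto
  have "run (stp r c) rs = (stp r c)\<lparr>loc := (\<lambda>r'. if r' \<in> set rs then upd A r' (loc (stp r c) r') Ack else loc (stp r c) r'),
                 mem := (mem (stp r c))(ob := mem (stp r c) ob @ map wv rs)\<rparr>"
    using Cons s by (intro Cons.IH) auto
  then show ?case using Cons.prems unfolding run_Cons s by (simp cong: if_cong) (rule arg_cong2[where f="\<lambda>a b. c\<lparr>loc := a, mem := b\<rparr>"]; auto simp: fun_eq_iff)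
qed

end


context cons begin

lemma term_sc: "(\<forall>t. \<sigma> t < n) \<Longrightarrow> p < n \<Longrightarrow> (\<forall>T. \<exists>t\<ge>T. \<sigma> t = p) \<Longrightarrow>
  \<exists>t. dec (exec k kind rinit A x \<sigma> t) p \<noteq> None"
  using sc unfolding solves_consensus_def by blast

lemma dv_first:
  assumes "reach c" "biv c" "dv c v" shows "\<exists>p<n. dv (stp p c) v"
proof -
  obtain qs r where q: "set qs \<subseteq> {..<n}" "r < n" "dec (run c qs) r = Some v"
    using assms(3) unfolding dv_def by auto
  have "qs \<noteq> []" using q biv_undec[OF assms(1,2) q(2)] by auto
  then obtain p qs' where "qs = p # qs'" by (cases qs) auto
  then show ?thesis using q unfolding dv_def by auto
qed

lemma dv_ex: assumes "reach c" shows "\<exists>d. dv c d"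
proof -
  obtain m d where "dec (run c (replicate m 0)) 0 = Some d" using termin[OF assms n_pos] by blast
  then show ?thesis unfolding dv_def using n_pos
    by (intro exI[of _ d] exI[of _ "replicate m 0"] exI[of _ 0]) auto
qed

lemma critical_false:
  assumes rc: "reach c" and bc: "biv c" and crit: "\<forall>p<n. \<not> biv (stp p c)"
  shows False
proof -
  obtain a b where ab: "a \<noteq> b" "dv c a" "dv c b" using bc biv_def by auto
  obtain p where p: "p < n" "dv (stp p c) a" using dv_first[OF rc bc ab(2)] by auto
  obtain q where q: "q < n" "dv (stp q c) b" using dv_first[OF rc bc ab(3)] by auto
  have pq: "p \<noteq> q" using crit p q ab unfolding biv_def by blast
  obtain ob vp vq where ob: "kind ob = SlidingReg" "act A p (loc c p) = Invoke ob (Write vp)"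
    "act A q (loc c q) = Invoke ob (Write vq)"
    using pair[OF rc bc p(1) q(1) _ _ p(2) q(2) ab(1)] crit p q by blast
  have allw: "\<exists>v. act A r (loc c r) = Invoke ob (Write v)" if r: "r < n" for r
  proof -
    obtain d where d: "dv (stp r c) d" using dv_ex reach_stp[OF rc r] by blast
    show ?thesis
    proof (cases "d = a")
      case False
      have nb: "\<not> biv (stp p c)" "\<not> biv (stp r c)" using crit p(1) r by auto
      obtain ob' v1 v2 where "act A p (loc c p) = Invoke ob' (Write v1)" "act A r (loc c r) = Invoke ob' (Write v2)"
        using pair[OF rc bc p(1) r nb p(2) d] False by blast
      then show ?thesis using ob(2) by auto
    next
      case True
      then have "b \<noteq> d" using ab by auto
      have nb: "\<not> biv (stp q c)" "\<not> biv (stp r c)" using crit q(1) r by auto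
      obtain ob' v1 v2 where "act A q (loc c q) = Invoke ob' (Write v1)" "act A r (loc c r) = Invoke ob' (Write v2)"
        using pair[OF rc bc q(1) r nb q(2) d] \<open>b \<noteq> d\<close> by blast
      then show ?thesis using ob(3) by auto
    qed
  qed
  define wv where "wv r = (SOME v. act A r (loc c r) = Invoke ob (Write v))" for r
  have wv: "act A r (loc c r) = Invoke ob (Write (wv r))" if "r < n" for r
    unfolding wv_def using someI_ex[OF allw[OF that]] .
  define rs' where "rs' = filter (\<lambda>r. r \<noteq> p \<and> r \<noteq> q) [0..<n]"
  define rs where "rs = q # rs'"
  have drs: "distinct rs" unfolding rs_def rs'_def by auto
  have srs: "set rs = {..<n} - {p}" unfolding rs_def rs'_def using q(1) pq by auto
  have lrs: "length rs = k"
    using distinct_card[OF drs] srs p(1) nk by simp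
  have srs': "set rs' \<subseteq> {..<n}" unfolding rs'_def by auto
  have dc: "dec c r = None" if "r < n" for r using biv_undec[OF rc bc that] .
  have sp: "stp p c = c\<lparr>loc := (loc c)(p := upd A p (loc c p) Ack), mem := (mem c)(ob := mem c ob @ [vp])\<rparr>"
    using stp_write[OF dc[OF p(1)] ob(2)] .
  have r1: "run c rs = c\<lparr>loc := (\<lambda>r. if r \<in> set rs then upd A r (loc c r) Ack else loc c r),
                 mem := (mem c)(ob := mem c ob @ map wv rs)\<rparr>"
    by (rule run_writes[OF drs]) (simp add: srs dc wv)
  have r2: "run (stp p c) rs = (stp p c)\<lparr>loc := (\<lambda>r. if r \<in> set rs then upd A r (loc (stp p c) r) Ack else loc (stp p c) r),
                 mem := (mem (stp p c))(ob := mem (stp p c) ob @ map wv rs)\<rparr>"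
    by (rule run_writes[OF drs]) (simp add: srs dc wv sp)
  have "sim {p} (run (stp p c) rs) (run c rs)"
    unfolding sim_def
  proof (intro conjI allI impI)
    fix r assume "r \<notin> {p}"
    then show "loc (run (stp p c) rs) r = loc (run c rs) r" using r1 r2 sp by simp
  next
    show "dec (run (stp p c) rs) = dec (run c rs)" using r1 r2 sp by simp
  next
    fix ob'
    show "read_resp k kind rinit ob' (mem (run (stp p c) rs) ob') = read_resp k kind rinit ob' (mem (run c rs) ob')"
    proof (cases "ob' = ob")
      case True
      have "window k ((mem c ob @ [vp]) @ map wv rs) = window k (mem c ob @ map wv rs)"
        using lrs by (simp only: window_long length_map)
      then show ?thesis using True r1 r2 sp ob(1) by (simp add: read_resp_def)
    next
      case False
      then show ?thesis using r1 r2 sp by simp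
    qed
  qed
  then have "sim {p} (run (stp p c) rs) (run (stp q c) rs')" unfolding rs_def by simp
  moreover have "\<not> biv (stp p c)" "\<not> biv (stp q c)" using crit p(1) q(1) by auto
  moreover have "set rs \<subseteq> {..<n}" using srs by auto
  ultimately show False
    using contra[OF rc p(1) q(1) _ _ p(2) q(2) ab(1), of rs rs' q "{p}"] q(1) pq srs'
    by blast
qed

lemma main_false:
  fixes a b :: 'v assumes ab: "a \<noteq> b" shows False
proof -
  define x where "x i = (if i = 0 then a else b)" for i :: nat
  have n1: "1 < n" using nk k1 by simp
  have solo: "dv (initial A x) (y j)" if j: "j < n" and xy: "x j = y j" "\<forall>i. y i = y j" for j y
  proof -
    have "reach (initial A y)" unfolding reach_def by (intro exI[of _ y] exI[of _ "[]"]) auto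
    then obtain m d where md: "dec (run (initial A y) (replicate m j)) j = Some d"
      using termin j by blast
    have "sim {r. r \<noteq> j} (initial A x) (initial A y)"
      using xy by (simp add: sim_def initial_def)
    then have "sim {r. r \<noteq> j} (run (initial A x) (replicate m j)) (run (initial A y) (replicate m j))"
      by (intro sim_run) auto
    then have "dec (run (initial A x) (replicate m j)) j = Some d" using md by (simp add: sim_def)
    moreover have "d = y j"
    proof -
      have "set (replicate m j) \<subseteq> {..<n}" using j by auto
      then obtain q where "d = y q" using validity[of "replicate m j" j y d] md j by blast
      then show ?thesis using xy by simp
    qed
    ultimately show ?thesis unfolding dv_def using j
      by (intro exI[of _ "replicate m j"] exI[of _ j]) auto
  qed
  have "dv (initial A x) a" using solo[of 0 "\<lambda>_. a"] n_pos by (simp add: x_def)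
  moreover have "dv (initial A x) b" using solo[of 1 "\<lambda>_. b"] n1 by (simp add: x_def)
  ultimately have b0: "biv (initial A x)" unfolding biv_def using ab by blast
  define C where "C ps = run (initial A x) ps" for ps
  have reachC: "set ps \<subseteq> {..<n} \<Longrightarrow> reach (C ps)" for ps
    unfolding reach_def C_def by blast
  show False
  proof (cases "\<exists>ps. set ps \<subseteq> {..<n} \<and> biv (C ps) \<and> (\<forall>p<n. \<not> biv (stp p (C ps)))")
    case True
    then obtain ps where "set ps \<subseteq> {..<n}" "biv (C ps)" "\<forall>p<n. \<not> biv (stp p (C ps))" by blast
    then show False using critical_false reachC by blast
  next
    case False
    have Csnoc: "C (ps @ [p]) = stp p (C ps)" for ps p by (simp add: C_def)
    have nc: "\<exists>p<n. biv (C (ps @ [p]))" if "set ps \<subseteq> {..<n}" "biv (C ps)" for ps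
      using False that unfolding Csnoc by blast
    define g where "g ps = (SOME p. p < n \<and> biv (C (ps @ [p])))" for ps
    have inv: "set (iter_path g t) \<subseteq> {..<n} \<and> biv (C (iter_path g t))" for t
    proof (induction t)
      case 0
      then show ?case using b0 by (simp add: C_def)
    next
      case (Suc t)
      then obtain p0 where "p0 < n \<and> biv (C (iter_path g t @ [p0]))" using nc by blast
      then have "(\<lambda>p. p < n \<and> biv (C (iter_path g t @ [p]))) (SOME p. p < n \<and> biv (C (iter_path g t @ [p])))"
        by (rule someI[where P = "\<lambda>p. p < n \<and> biv (C (iter_path g t @ [p]))"])
      then have "g (iter_path g t) < n \<and> biv (C (iter_path g t @ [g (iter_path g t)]))"
        unfolding g_def by simp
      then show ?case using Suc by simp
    qed
    define \<sigma> where "\<sigma> t = g (iter_path g t)" for t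
    have path: "iter_path g t = map \<sigma> [0..<t]" for t unfolding \<sigma>_def by (rule iter_path_map)
    have slt: "\<forall>t. \<sigma> t < n"
    proof
      fix t show "\<sigma> t < n" using inv[of "Suc t"] by (simp add: \<sigma>_def)
    qed
    obtain p where p: "p < n" "\<forall>T. \<exists>t\<ge>T. \<sigma> t = p" using pigeon[OF slt] by blast
    then obtain t where "dec (exec k kind rinit A x \<sigma> t) p \<noteq> None"
      using term_sc[OF slt p(1,2)] by blast
    then have "dec (C (iter_path g t)) p \<noteq> None" by (simp add: exec_run path C_def)
    moreover have "dec (C (iter_path g t)) p = None"
      using biv_undec[OF reachC _ p(1)] inv by blast
    ultimately show False by simp
  qed
qed

end

theorem theorem2:
  fixes k :: nat
    and kind :: "'o \<Rightarrow> objkind"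
    and rinit :: "'o \<Rightarrow> 'r"
    and A :: "('s, 'v, 'o, 'r) algorithm"
  assumes "k \<ge> 1"
    and "\<exists>a b :: 'v. a \<noteq> b"
  shows "\<not> solves_consensus k (k + 1) kind rinit A"
proof
  assume s: "solves_consensus k (k + 1) kind rinit A"
  interpret cons k "k + 1" kind rinit A using assms(1) s by unfold_locales auto
  obtain a b :: 'v where "a \<noteq> b" using assms(2) by blast
  then show False by (rule main_false)
qed

end
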